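(* Let $(\gamma_n)$ be a sequence of positive reals satisfying conditions (C1)–(C7) below, and let $f\in\mathcal{L}$. Then the sequence $\beta_n^f(t)$ converges to a constant function $L$, and the sequence \[ \nu_n^f(t)=\frac{\sum_{k=0}^n |K^k[f(t)]|^2}{\sum_{k=0}^n \frac{1}{\gamma_k}} \] converges to the constant function $L/2$, uniformly on every compact interval.
   Context: Given positive reals $\gamma_n$, set $\gamma_{-1}=1$, $p_{-1}=0$, $p_0=1$ and $\gamma_n p_{n+1}(\omega)=\omega p_n(\omega)-\gamma_{n-1}p_{n-1}(\omega)$ ($n\ge0$). Let $\Delta_n=\gamma_{n+1}-\gamma_n$, $\Delta^2_n=\Delta_{n+1}-\Delta_n$. Conditions: (C1) $\gamma_n\to\infty$; (C2) $\Delta_n\to0$; (C3) there exist $n_0,m_0$ with $\gamma_{n+m}>\gamma_n$ for all $n\ge n_0$, $m\ge m_0$; (C4) $\sum 1/\gamma_j=\infty$; (C5) some $\kappa>1$ has $\sum\gamma_j^{-\kappa}<\infty$; (C6) $\sum|\Delta_n|/\gamma_n^2<\infty$; (C7) $\sum|\Delta^2_n|/\gamma_n<\infty$. $C^\infty_{\mathbb{R}\to\mathbb{C}}$ is the set of functions $\mathbb{R}\to\mathbb{C}$ with infinitely differentiable real and imaginary parts. $K^n_t=(-i)^n p_n\!\left(i\frac{d}{dt}\right)$ (index $t$ may be omitted). $\beta_n^f(t)=\gamma_n(|K^n[f(t)]|^2+|K^{n+1}[f(t)]|^2)$, and $\mathcal{L}$ is the set of $f\in C^\infty_{\mathbb{R}\to\mathbb{C}}$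 for which $\beta_n^f(t)$ converges uniformly on every compact interval. *)

theory Defs
  imports "HOL-Analysis.Analysis" "HOL-Computational_Algebra.Polynomial"
begin

text \<open>Orthonormal polynomials p_n given by the three-term recurrence
  gamma_n p_(n+1) = w p_n - gamma_(n-1) p_(n-1), with p_(-1) = 0, p_0 = 1, gamma_(-1) = 1.\<close>
fun opoly :: "(nat \<Rightarrow> real) \<Rightarrow> nat \<Rightarrow> real poly" where
  "opoly \<gamma> 0 = 1"
| "opoly \<gamma> (Suc 0) = smult (1 / \<gamma> 0) [:0, 1:]"
| "opoly \<gamma> (Suc (Suc n)) =
     smult (1 / \<gamma> (Suc n)) ([:0, 1:] * opoly \<gamma> (Suc n) - smult (\<gamma> n) (opoly \<gamma> n))"

definition cderiv :: "nat \<Rightarrow> (real \<Rightarrow> complex) \<Rightarrow> real \<Rightarrow> complex" where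
  "cderiv k f t = complex_of_real (((deriv ^^ k) (\<lambda>s. Re (f s))) t)
                 + \<i> * complex_of_real (((deriv ^^ k) (\<lambda>s. Im (f s))) t)"

definition smooth_RC :: "(real \<Rightarrow> complex) \<Rightarrow> bool" where
  "smooth_RC f \<longleftrightarrow> (\<forall>k x. ((deriv ^^ k) (\<lambda>s. Re (f s))) differentiable (at x)
                        \<and> ((deriv ^^ k) (\<lambda>s. Im (f s))) differentiable (at x))"

text \<open>K^n = (-i)^n p_n(i d/dt).\<close>
definition Kop :: "(nat \<Rightarrow> real) \<Rightarrow> nat \<Rightarrow> (real \<Rightarrow> complex) \<Rightarrow> real \<Rightarrow> complex" where
  "Kop \<gamma> n f t = (- \<i>) ^ n *
     (\<Sum>k\<le>degree (opoly \<gamma> n). complex_of_real (coeff (opoly \<gamma> n) k) * \<i> ^ k * cderiv k f t)"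

definition beta :: "(nat \<Rightarrow> real) \<Rightarrow> nat \<Rightarrow> (real \<Rightarrow> complex) \<Rightarrow> real \<Rightarrow> real" where
  "beta \<gamma> n f t = \<gamma> n * ((cmod (Kop \<gamma> n f t))\<^sup>2 + (cmod (Kop \<gamma> (Suc n) f t))\<^sup>2)"

definition nu :: "(nat \<Rightarrow> real) \<Rightarrow> nat \<Rightarrow> (real \<Rightarrow> complex) \<Rightarrow> real \<Rightarrow> real" where
  "nu \<gamma> n f t = (\<Sum>k\<le>n. (cmod (Kop \<gamma> k f t))\<^sup>2) / (\<Sum>k\<le>n. 1 / \<gamma> k)"

definition classL :: "(nat \<Rightarrow> real) \<Rightarrow> (real \<Rightarrow> complex) set" where
  "classL \<gamma> = {f. smooth_RC f \<and>
      (\<forall>a b. uniformly_convergent_on {a..b} (\<lambda>n t. beta \<gamma> n f t))}"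

end

theory Submission
  imports Defs
begin


definition Ak :: "nat \<Rightarrow> (real \<Rightarrow> complex) \<Rightarrow> real poly \<Rightarrow> real \<Rightarrow> complex" where
  "Ak j f P t = (\<Sum>k\<le>degree P. complex_of_real (coeff P k) * \<i> ^ k * cderiv (k + j) f t)"

lemma Ak_ext: "degree P \<le> M \<Longrightarrow>
  Ak j f P t = (\<Sum>k\<le>M. complex_of_real (coeff P k) * \<i> ^ k * cderiv (k + j) f t)"
  unfolding Ak_def by (rule sum.mono_neutral_left) (auto simp: coeff_eq_0)

lemma Ak_diff: "Ak j f (P - Q) t = Ak j f P t - Ak j f Q t"
proof -
  let ?M = "max (degree P) (degree Q)"
  have "degree (P - Q) \<le> ?M" by (rule degree_diff_le) auto
  then show ?thesis
    by (simp add: Ak_ext[of _ ?M] sum_subtractf[symmetric] algebra_simps)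
qed

lemma Ak_smult: "Ak j f (smult c P) t = of_real c * Ak j f P t"
  by (simp add: Ak_ext[OF degree_smult_le[of c P]] Ak_ext[of P "degree P"] sum_distrib_left algebra_simps)

lemma Ak_pCons0: "Ak j f (pCons 0 P) t = \<i> * Ak (Suc j) f P t"
proof -
  have "degree (pCons 0 P) \<le> Suc (degree P)" by (rule degree_pCons_le)
  then have "Ak j f (pCons 0 P) t = (\<Sum>k\<le>Suc (degree P). complex_of_real (coeff (pCons 0 P) k) * \<i> ^ k * cderiv (k + j) f t)"
    by (rule Ak_ext)
  also have "\<dots> = (\<Sum>k\<le>degree P. complex_of_real (coeff P k) * \<i> ^ Suc k * cderiv (Suc k + j) f t)"
    by (subst sum.atMost_Suc_shift) simp
  also have "\<dots> = \<i> * Ak (Suc j) f P t"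
    unfolding Ak_def by (simp add: sum_distrib_left algebra_simps)
  finally show ?thesis .
qed

lemma Ak_one: "Ak j f 1 t = cderiv j f t"
  by (simp add: Ak_def)

lemma cderiv0: "cderiv 0 f t = f t"
  by (simp add: cderiv_def complex_eq_iff)

lemma cderiv_deriv:
  assumes "smooth_RC f"
  shows "(cderiv k f has_vector_derivative cderiv (Suc k) f t) (at t)"
proof -
  have r: "((deriv ^^ k) (\<lambda>s. Re (f s)) has_real_derivative (deriv ^^ Suc k) (\<lambda>s. Re (f s)) t) (at t)"
    using assms unfolding smooth_RC_def by (simp add: DERIV_deriv_iff_real_differentiable)
  have i: "((deriv ^^ k) (\<lambda>s. Im (f s)) has_real_derivative (deriv ^^ Suc k) (\<lambda>s. Im (f s)) t) (at t)"
    using assms unfolding smooth_RC_def by (simp add: DERIV_deriv_iff_real_differentiable)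
  show ?thesis
    unfolding cderiv_def[abs_def]
    by (intro has_vector_derivative_add has_vector_derivative_mult_right has_vector_derivative_of_real r i)
qed

lemma Ak_deriv:
  assumes "smooth_RC f"
  shows "(Ak j f P has_vector_derivative Ak (Suc j) f P t) (at t)"
  unfolding Ak_def[abs_def]
  apply (rule has_vector_derivative_sum)
  apply (rule has_vector_derivative_mult_right)
  using cderiv_deriv[OF assms] by simp

lemma x_mult: "[:0, 1:] * P = pCons 0 (P::real poly)"
  by simp

lemma Kop_Ak: "Kop \<gamma> n f t = (- \<i>) ^ n * Ak 0 f (opoly \<gamma> n) t"
  by (simp add: Kop_def Ak_def)

definition Vop where "Vop \<gamma> n f t = (- \<i>) ^ n * Ak 1 f (opoly \<gamma> n) t"

lemma Kop_deriv:
  assumes "smooth_RC f"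
  shows "(Kop \<gamma> n f has_vector_derivative Vop \<gamma> n f t) (at t)"
  unfolding Kop_Ak[abs_def] Vop_def
  by (intro has_vector_derivative_mult_right) (simp add: Ak_deriv[OF assms, of 0, simplified])

lemma Vop0:
  assumes "\<gamma> 0 > 0"
  shows "Vop \<gamma> 0 f t = of_real (\<gamma> 0) * Kop \<gamma> 1 f t"
proof -
  have "opoly \<gamma> 1 = smult (1 / \<gamma> 0) (pCons 0 1)" by simp
  then have "Kop \<gamma> 1 f t = (- \<i>) * (of_real (1 / \<gamma> 0) * (\<i> * Ak 1 f 1 t))"
    by (simp only: Kop_Ak Ak_smult Ak_pCons0 power_one_right One_nat_def power_Suc power_0 mult_1_right)
  moreover have "Vop \<gamma> 0 f t = Ak 1 f 1 t" by (simp add: Vop_def)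
  ultimately show ?thesis using assms by (simp add: field_simps)
qed

lemma VopSuc:
  assumes "\<gamma> (Suc m) > 0"
  shows "Vop \<gamma> (Suc m) f t = of_real (\<gamma> (Suc m)) * Kop \<gamma> (Suc (Suc m)) f t - of_real (\<gamma> m) * Kop \<gamma> m f t"
proof -
  have "opoly \<gamma> (Suc (Suc m)) = smult (1 / \<gamma> (Suc m)) (pCons 0 (opoly \<gamma> (Suc m)) - smult (\<gamma> m) (opoly \<gamma> m))"
    by (simp only: opoly.simps x_mult)
  then show ?thesis using assms
    by (simp add: Vop_def Kop_Ak Ak_smult Ak_pCons0 Ak_diff algebra_simps del: opoly.simps)
qed



lemma normsq_deriv:
  assumes "(u has_vector_derivative u') (at t)"
  shows "((\<lambda>t. (cmod (u t))\<^sup>2) has_real_derivative 2 * inner (u t) u') (at t)"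
proof -
  have "((\<lambda>t. inner (u t) (u t)) has_vector_derivative (inner (u t) u' + inner u' (u t))) (at t)"
    by (rule bounded_bilinear.has_vector_derivative[OF bounded_bilinear_inner assms assms])
  then show ?thesis
    by (simp add: power2_norm_eq_inner has_real_derivative_iff_has_vector_derivative inner_commute[of u'])
qed

lemma inner_ofreal_right: "inner (x::complex) (complex_of_real c * y) = c * inner x y"
  by (simp add: inner_complex_def algebra_simps)

definition Tsum where "Tsum \<gamma> N f t = (\<Sum>n\<le>N. (cmod (Kop \<gamma> n f t))\<^sup>2)"

lemma T_deriv:
  assumes pos: "\<And>n. \<gamma> n > 0" and sm: "smooth_RC f"
  shows "((\<lambda>t. Tsum \<gamma> N f t) has_real_derivative
           2 * \<gamma> N * inner (Kop \<gamma> N f t) (Kop \<gamma> (Suc N) f t)) (at t)"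
proof (induction N)
  case 0
  have "((\<lambda>t. (cmod (Kop \<gamma> 0 f t))\<^sup>2) has_real_derivative 2 * inner (Kop \<gamma> 0 f t) (Vop \<gamma> 0 f t)) (at t)"
    by (rule normsq_deriv[OF Kop_deriv[OF sm]])
  then show ?case
    by (simp add: Tsum_def Vop0[OF pos] inner_ofreal_right mult.assoc)
next
  case (Suc m)
  have d: "((\<lambda>t. (cmod (Kop \<gamma> (Suc m) f t))\<^sup>2) has_real_derivative 2 * inner (Kop \<gamma> (Suc m) f t) (Vop \<gamma> (Suc m) f t)) (at t)"
    by (rule normsq_deriv[OF Kop_deriv[OF sm]])
  have eq: "(\<lambda>t. Tsum \<gamma> (Suc m) f t) = (\<lambda>t. Tsum \<gamma> m f t + (cmod (Kop \<gamma> (Suc m) f t))\<^sup>2)"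
    by (simp add: Tsum_def)
  show ?case
    unfolding eq
    using DERIV_add[OF Suc.IH d]
    by (simp add: VopSuc[OF pos] inner_ofreal_right inner_diff_right
        inner_commute[of "Kop \<gamma> (Suc m) f t" "Kop \<gamma> m f t"] algebra_simps)
qed

lemma deriv_bound:
  assumes pos: "\<And>n. \<gamma> n > 0"
  shows "\<bar>2 * \<gamma> N * inner (Kop \<gamma> N f t) (Kop \<gamma> (Suc N) f t)\<bar> \<le> beta \<gamma> N f t"
proof -
  let ?a = "cmod (Kop \<gamma> N f t)" and ?b = "cmod (Kop \<gamma> (Suc N) f t)"
  have "\<bar>inner (Kop \<gamma> N f t) (Kop \<gamma> (Suc N) f t)\<bar> \<le> ?a * ?b" by (rule Cauchy_Schwarz_ineq2)
  moreover have "2 * (?a * ?b) \<le> ?a\<^sup>2 + ?b\<^sup>2" using sum_squares_bound[of ?a ?b] by simp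
  ultimately have "2 * \<bar>inner (Kop \<gamma> N f t) (Kop \<gamma> (Suc N) f t)\<bar> \<le> ?a\<^sup>2 + ?b\<^sup>2" by linarith
  then have "\<gamma> N * (2 * \<bar>inner (Kop \<gamma> N f t) (Kop \<gamma> (Suc N) f t)\<bar>) \<le> \<gamma> N * (?a\<^sup>2 + ?b\<^sup>2)"
    using pos[of N] by (intro mult_left_mono) auto
  then show ?thesis using pos[of N] by (simp add: beta_def abs_mult)
qed

lemma beta_nonneg: "(\<And>n. \<gamma> n > 0) \<Longrightarrow> beta \<gamma> n f t \<ge> 0"
  unfolding beta_def by (simp add: less_imp_le)

lemma beta_sum:
  assumes pos: "\<And>n. \<gamma> n > 0"
  shows "(\<Sum>n\<le>N. beta \<gamma> n f t / \<gamma> n) = 2 * Tsum \<gamma> N f t + (cmod (Kop \<gamma> (Suc N) f t))\<^sup>2 - (cmod (Kop \<gamma> 0 f t))\<^sup>2"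
proof (induction N)
  case 0
  then show ?case using pos[of 0] by (simp add: beta_def Tsum_def)
next
  case (Suc N)
  then show ?case using pos[of "Suc N"] by (simp add: beta_def Tsum_def)
qed

lemma Kop_cont: "smooth_RC f \<Longrightarrow> continuous_on S (Kop \<gamma> n f)"
  by (meson Kop_deriv continuous_at_imp_continuous_on has_vector_derivative_continuous)

lemma beta_cont: "smooth_RC f \<Longrightarrow> continuous_on S (beta \<gamma> n f)"
  unfolding beta_def[abs_def] by (intro continuous_intros Kop_cont)

lemma cont_bounded:
  fixes g :: "real \<Rightarrow> real"
  assumes "continuous_on {a..b} g"
  shows "\<exists>B. \<forall>x\<in>{a..b}. \<bar>g x\<bar> \<le> B"
proof -
  have "bounded (g ` {a..b})"
    by (rule compact_imp_bounded, rule compact_continuous_image[OF assms compact_Icc])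
  then show ?thesis by (auto simp: bounded_iff)
qed

lemma partial_sums_at_top:
  fixes w :: "nat \<Rightarrow> real"
  assumes pos: "\<And>n. w n > 0" and ns: "\<not> summable w"
  shows "filterlim (\<lambda>N. \<Sum>n\<le>N. w n) at_top sequentially"
  unfolding filterlim_at_top eventually_sequentially
proof
  fix Z
  have "\<exists>n. (\<Sum>i<n. w i) > Z"
  proof (rule ccontr)
    assume "\<not> ?thesis"
    then have "\<And>n. (\<Sum>i<n. w i) \<le> Z" by (simp add: not_less)
    then have "summable w" by (intro summableI_nonneg_bounded[where x=Z]) (use pos in \<open>auto intro: less_imp_le\<close>)
    with ns show False by simp
  qed
  then obtain n where n: "(\<Sum>i<n. w i) > Z" by blast
  show "\<exists>N. \<forall>m\<ge>N. Z \<le> (\<Sum>n\<le>m. w n)"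
  proof (intro exI allI impI)
    fix m assume "n \<le> m"
    have "(\<Sum>i<n. w i) \<le> (\<Sum>i\<le>m. w i)"
      by (rule sum_mono2) (use \<open>n \<le> m\<close> pos in \<open>auto intro: less_imp_le\<close>)
    with n show "Z \<le> (\<Sum>n\<le>m. w n)" by simp
  qed
qed



lemma cesaro_unif:
  fixes w :: "nat \<Rightarrow> real" and F :: "nat \<Rightarrow> 'a \<Rightarrow> real"
  assumes pos: "\<And>n. w n > 0" and ns: "\<not> summable w"
    and lim: "uniform_limit S F g sequentially"
    and bF: "\<And>n. \<exists>B. \<forall>t\<in>S. \<bar>F n t\<bar> \<le> B"
    and bg: "\<exists>B. \<forall>t\<in>S. \<bar>g t\<bar> \<le> B"
  shows "uniform_limit S (\<lambda>N t. (\<Sum>n\<le>N. w n * F n t) / (\<Sum>n\<le>N. w n)) g sequentially"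
proof (rule uniform_limitI)
  fix e :: real assume e: "e > 0"
  obtain Bf where Bf: "\<And>n t. t \<in> S \<Longrightarrow> \<bar>F n t\<bar> \<le> Bf n" using bF by metis
  obtain Bg where Bg: "\<And>t. t \<in> S \<Longrightarrow> \<bar>g t\<bar> \<le> Bg" using bg by blast
  have "\<forall>\<^sub>F n in sequentially. \<forall>t\<in>S. dist (F n t) (g t) < e / 2"
    using uniform_limitD[OF lim, of "e/2"] e by simp
  then obtain N0 where N0: "\<And>n t. n \<ge> N0 \<Longrightarrow> t \<in> S \<Longrightarrow> \<bar>F n t - g t\<bar> < e / 2"
    by (auto simp: eventually_sequentially dist_real_def)
  define C where "C = (\<Sum>n<N0. w n * (Bf n + Bg))"
  have "\<forall>\<^sub>F N in sequentially. 2 * \<bar>C\<bar> / e + 1 \<le> (\<Sum>n\<le>N. w n)"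
    using partial_sums_at_top[OF pos ns] unfolding filterlim_at_top by blast
  moreover have "\<forall>\<^sub>F N in sequentially. N \<ge> N0" by (rule eventually_ge_at_top)
  ultimately show "\<forall>\<^sub>F N in sequentially. \<forall>t\<in>S.
      dist ((\<Sum>n\<le>N. w n * F n t) / (\<Sum>n\<le>N. w n)) (g t) < e"
  proof eventually_elim
    case (elim N)
    define W where "W = (\<Sum>n\<le>N. w n)"
    have Wpos: "W > 0" unfolding W_def using pos by (intro sum_pos) auto
    have CW: "\<bar>C\<bar> < e / 2 * W"
    proof -
      have "2 * \<bar>C\<bar> / e < W" using elim(1) unfolding W_def by linarith
      then have "2 * \<bar>C\<bar> < W * e" using e by (simp add: divide_less_eq)
      then show ?thesis by (simp add: mult.commute)
    qed
    show ?case
    proof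
      fix t assume t: "t \<in> S"
      have eq: "(\<Sum>n\<le>N. w n * F n t) / W - g t = (\<Sum>n\<le>N. w n * (F n t - g t)) / W"
        using Wpos by (simp add: field_simps sum_subtractf sum_distrib_left W_def right_diff_distrib)
      have trm: "\<bar>w n * (F n t - g t)\<bar> \<le> (if n \<in> {..<N0} then w n * (Bf n + Bg) else 0) + w n * (e / 2)" for n
      proof (cases "n < N0")
        case True
        have "\<bar>F n t - g t\<bar> \<le> Bf n + Bg" using Bf[OF t, of n] Bg[OF t] by linarith
        then have "w n * \<bar>F n t - g t\<bar> \<le> w n * (Bf n + Bg)" using pos[of n] by (intro mult_left_mono) auto
        moreover have "0 \<le> w n * (e/2)" using pos[of n] e by simp
        moreover have "\<bar>w n * (F n t - g t)\<bar> = w n * \<bar>F n t - g t\<bar>" using pos[of n] by (simp add: abs_mult)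
        ultimately show ?thesis using True by simp
      next
        case False
        then have "\<bar>F n t - g t\<bar> \<le> e / 2" using N0[OF _ t, of n] by simp
        then have "w n * \<bar>F n t - g t\<bar> \<le> w n * (e / 2)" using pos[of n] by (intro mult_left_mono) auto
        moreover have "\<bar>w n * (F n t - g t)\<bar> = w n * \<bar>F n t - g t\<bar>" using pos[of n] by (simp add: abs_mult)
        ultimately show ?thesis using False by simp
      qed
      have "\<bar>\<Sum>n\<le>N. w n * (F n t - g t)\<bar> \<le> (\<Sum>n\<le>N. \<bar>w n * (F n t - g t)\<bar>)" by (rule sum_abs)
      also have "\<dots> \<le> (\<Sum>n\<le>N. (if n \<in> {..<N0} then w n * (Bf n + Bg) else 0) + w n * (e / 2))"
        by (rule sum_mono) (rule trm)
      also have "\<dots> = (\<Sum>n\<in>{..N} \<inter> {..<N0}. w n * (Bf n + Bg)) + (e / 2) * W"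
      proof -
        have a: "(\<Sum>n\<le>N. (if n \<in> {..<N0} then w n * (Bf n + Bg) else 0)) = (\<Sum>n\<in>{..N} \<inter> {..<N0}. w n * (Bf n + Bg))"
          by (simp only: sum.inter_restrict[OF finite_atMost])
        have b: "(\<Sum>n\<le>N. w n * (e / 2)) = W * (e / 2)" unfolding W_def by (rule sum_distrib_right[symmetric])
        show ?thesis unfolding sum.distrib a b by (simp only: mult.commute)
      qed
      also have "(\<Sum>n\<in>{..N} \<inter> {..<N0}. w n * (Bf n + Bg)) = C"
      proof -
        have "{..N} \<inter> {..<N0} = {..<N0}" using elim(2) by auto
        then show ?thesis by (simp add: C_def)
      qed
      finally have "\<bar>\<Sum>n\<le>N. w n * (F n t - g t)\<bar> \<le> C + e / 2 * W" .
      with CW have "\<bar>\<Sum>n\<le>N. w n * (F n t - g t)\<bar> < e * W" by linarith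
      then have "\<bar>(\<Sum>n\<le>N. w n * (F n t - g t)) / W\<bar> < e"
      proof -
        have "\<bar>(\<Sum>n\<le>N. w n * (F n t - g t)) / W\<bar> = \<bar>\<Sum>n\<le>N. w n * (F n t - g t)\<bar> / W"
          using Wpos by (simp add: abs_divide)
        moreover have "\<bar>\<Sum>n\<le>N. w n * (F n t - g t)\<bar> / W < e"
          using \<open>\<bar>\<Sum>n\<le>N. w n * (F n t - g t)\<bar> < e * W\<close> by (simp only: pos_divide_less_eq[OF Wpos])
        ultimately show ?thesis by linarith
      qed
      then show "dist ((\<Sum>n\<le>N. w n * F n t) / (\<Sum>n\<le>N. w n)) (g t) < e"
        unfolding dist_real_def W_def[symmetric] eq .
    qed
  qed
qed



lemma beta_bound:
  assumes pos: "\<And>n. \<gamma> n > 0" and sm: "smooth_RC f"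
    and uc: "uniformly_convergent_on {a..b} (\<lambda>n t. beta \<gamma> n f t)"
  shows "\<exists>N0 M. \<forall>n\<ge>N0. \<forall>x\<in>{a..b}. beta \<gamma> n f x \<le> M"
proof -
  obtain l where l: "uniform_limit {a..b} (\<lambda>n t. beta \<gamma> n f t) l sequentially"
    using uc unfolding uniformly_convergent_on_def by blast
  obtain N0 where N0: "\<And>n x. n \<ge> N0 \<Longrightarrow> x \<in> {a..b} \<Longrightarrow> dist (beta \<gamma> n f x) (l x) < 1/2"
    using uniform_limitD[OF l, of "1/2"] unfolding eventually_sequentially by (metis half_gt_zero zero_less_one)
  obtain B where B: "\<And>x. x \<in> {a..b} \<Longrightarrow> \<bar>beta \<gamma> N0 f x\<bar> \<le> B"
    using cont_bounded[OF beta_cont[OF sm]] by blast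
  have "\<forall>n\<ge>N0. \<forall>x\<in>{a..b}. beta \<gamma> n f x \<le> B + 1"
  proof (intro allI impI ballI)
    fix n x assume n: "n \<ge> N0" and x: "x \<in> {a..b}"
    have "\<bar>beta \<gamma> n f x - l x\<bar> < 1/2" using N0[OF n x] by (simp add: dist_real_def)
    moreover have "\<bar>beta \<gamma> N0 f x - l x\<bar> < 1/2" using N0[OF order.refl x] by (simp add: dist_real_def)
    moreover note B[OF x]
    ultimately show "beta \<gamma> n f x \<le> B + 1" by linarith
  qed
  then show ?thesis by blast
qed

lemma Ksq_le_beta:
  assumes pos: "\<And>n. \<gamma> n > 0" and g1: "1 \<le> \<gamma> N"
  shows "(cmod (Kop \<gamma> (Suc N) f x))\<^sup>2 \<le> beta \<gamma> N f x"
proof -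
  have "(cmod (Kop \<gamma> (Suc N) f x))\<^sup>2 \<le> \<gamma> N * (cmod (Kop \<gamma> (Suc N) f x))\<^sup>2"
    using g1 by (simp add: mult_le_cancel_right1)
  also have "\<dots> \<le> beta \<gamma> N f x"
    unfolding beta_def using pos[of N] by (intro mult_left_mono) auto
  finally show ?thesis .
qed

lemma beta_conv:
  assumes uc: "\<And>a b. uniformly_convergent_on {a..b} (\<lambda>n t. beta \<gamma> n f t)"
  shows "(\<lambda>n. beta \<gamma> n f x) \<longlonglongrightarrow> lim (\<lambda>n. beta \<gamma> n f x)"
proof -
  have "uniformly_convergent_on {x} (\<lambda>n t. beta \<gamma> n f t)" using uc[of x x] by simp
  then show ?thesis by (simp add: uniformly_convergent_on_singleton convergent_LIMSEQ_iff)
qed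

lemma T_diff_bound:
  assumes pos: "\<And>n. \<gamma> n > 0" and sm: "smooth_RC f" and st: "s < t"
    and M: "\<And>x. x \<in> {s..t} \<Longrightarrow> beta \<gamma> N f x \<le> M"
  shows "\<bar>Tsum \<gamma> N f t - Tsum \<gamma> N f s\<bar> \<le> (t - s) * M"
proof -
  obtain z where z: "s < z" "z < t"
    and eq: "Tsum \<gamma> N f t - Tsum \<gamma> N f s = (t - s) * (2 * \<gamma> N * inner (Kop \<gamma> N f z) (Kop \<gamma> (Suc N) f z))"
    using MVT2[OF st, of "\<lambda>x. Tsum \<gamma> N f x" "\<lambda>x. 2 * \<gamma> N * inner (Kop \<gamma> N f x) (Kop \<gamma> (Suc N) f x)"]
      T_deriv[where \<gamma>=\<gamma>, OF pos sm] by blast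
  have "\<bar>2 * \<gamma> N * inner (Kop \<gamma> N f z) (Kop \<gamma> (Suc N) f z)\<bar> \<le> M"
    using deriv_bound[where \<gamma>=\<gamma>, OF pos, of N f z] M[of z] z by auto
  then have "(t - s) * \<bar>2 * \<gamma> N * inner (Kop \<gamma> N f z) (Kop \<gamma> (Suc N) f z)\<bar> \<le> (t - s) * M"
    using st by (intro mult_left_mono) auto
  then show ?thesis unfolding eq using st by (simp add: abs_mult)
qed

lemma beta_const:
  assumes pos: "\<And>n. \<gamma> n > 0" and C1: "filterlim \<gamma> at_top sequentially"
    and C4: "\<not> summable (\<lambda>j. 1 / \<gamma> j)" and sm: "smooth_RC f"
    and uc: "\<And>a b. uniformly_convergent_on {a..b} (\<lambda>n t. beta \<gamma> n f t)"
    and st: "s < t"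
  shows "lim (\<lambda>n. beta \<gamma> n f t) = lim (\<lambda>n. beta \<gamma> n f s)"
proof -
  define d where "d = lim (\<lambda>n. beta \<gamma> n f t) - lim (\<lambda>n. beta \<gamma> n f s)"
  define W where "W = (\<lambda>N. \<Sum>n\<le>N. 1 / \<gamma> n)"
  define D where "D = (\<lambda>N. \<Sum>n\<le>N. 1 / \<gamma> n * (beta \<gamma> n f t - beta \<gamma> n f s))"
  have wpos: "\<And>n. 1 / \<gamma> n > 0" using pos by simp
  have Wpos: "W N > 0" for N unfolding W_def using wpos by (intro sum_pos) auto
  have Winf: "filterlim W at_top sequentially"
    unfolding W_def by (rule partial_sums_at_top[OF wpos C4])
  have "uniform_limit {0::real} (\<lambda>N x. (\<Sum>n\<le>N. 1 / \<gamma> n * (beta \<gamma> n f t - beta \<gamma> n f s)) / (\<Sum>n\<le>N. 1 / \<gamma> n)) (\<lambda>x. d) sequentially"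
  proof (rule cesaro_unif[OF wpos C4])
    show "uniform_limit {0::real} (\<lambda>n x. beta \<gamma> n f t - beta \<gamma> n f s) (\<lambda>x. d) sequentially"
      unfolding uniform_limit_singleton d_def by (intro tendsto_diff beta_conv uc)
  qed auto
  then have c1: "(\<lambda>N. D N / W N) \<longlonglongrightarrow> d"
    unfolding uniform_limit_singleton D_def W_def .
  obtain N0 M where NM: "\<And>n x. n \<ge> N0 \<Longrightarrow> x \<in> {s..t} \<Longrightarrow> beta \<gamma> n f x \<le> M"
    using beta_bound[where \<gamma>=\<gamma>, OF pos sm uc[of s t]] by blast
  obtain N1 where N1: "\<And>n. n \<ge> N1 \<Longrightarrow> 1 \<le> \<gamma> n"
    using C1 unfolding filterlim_at_top eventually_sequentially by blast
  define B where "B = 2 * ((t - s) * M) + 2 * M + (cmod (Kop \<gamma> 0 f t))\<^sup>2 + (cmod (Kop \<gamma> 0 f s))\<^sup>2"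
  have Dbound: "\<bar>D N\<bar> \<le> B" if N: "N \<ge> max N0 N1" for N
  proof -
    have sst: "s \<in> {s..t}" "t \<in> {s..t}" using st by auto
    have "D N = (\<Sum>n\<le>N. beta \<gamma> n f t / \<gamma> n) - (\<Sum>n\<le>N. beta \<gamma> n f s / \<gamma> n)"
      unfolding D_def by (simp add: sum_subtractf[symmetric] diff_divide_distrib)
    also have "\<dots> = 2 * (Tsum \<gamma> N f t - Tsum \<gamma> N f s) + (cmod (Kop \<gamma> (Suc N) f t))\<^sup>2
        - (cmod (Kop \<gamma> (Suc N) f s))\<^sup>2 - (cmod (Kop \<gamma> 0 f t))\<^sup>2 + (cmod (Kop \<gamma> 0 f s))\<^sup>2"
      unfolding beta_sum[where \<gamma>=\<gamma>, OF pos] by simp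
    finally have Deq: "D N = \<dots>" .
    have T: "\<bar>Tsum \<gamma> N f t - Tsum \<gamma> N f s\<bar> \<le> (t - s) * M"
      by (rule T_diff_bound[where \<gamma>=\<gamma>, OF pos sm st]) (use NM N in auto)
    have K1: "(cmod (Kop \<gamma> (Suc N) f x))\<^sup>2 \<le> M" if "x \<in> {s..t}" for x
      using Ksq_le_beta[where \<gamma>=\<gamma>, OF pos N1[of N], of f x] NM[of N x] N that by auto
    show ?thesis unfolding Deq B_def using T K1[OF sst(1)] K1[OF sst(2)]
      by (smt (verit) zero_le_power2)
  qed
  have "(\<lambda>N. D N / W N) \<longlonglongrightarrow> 0"
  proof (rule Lim_null_comparison)
    show "\<forall>\<^sub>F N in sequentially. norm (D N / W N) \<le> B / W N"
      unfolding eventually_sequentially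
    proof (intro exI allI impI)
      fix N assume "max N0 N1 \<le> N"
      then have "\<bar>D N\<bar> \<le> B" by (intro Dbound) auto
      then show "norm (D N / W N) \<le> B / W N"
        using Wpos[of N] by (simp add: abs_divide divide_right_mono)
    qed
    show "(\<lambda>N. B / W N) \<longlonglongrightarrow> 0"
      by (rule tendsto_divide_0[OF tendsto_const filterlim_at_top_imp_at_infinity[OF Winf]])
  qed
  with c1 have "d = 0" by (rule LIMSEQ_unique)
  then show ?thesis unfolding d_def by simp
qed



lemma aux_half: "(x::real) = a / 2 - b / 2 \<Longrightarrow> \<bar>a\<bar> < e \<Longrightarrow> \<bar>b\<bar> < e \<Longrightarrow> \<bar>x\<bar> < e"
  by (simp add: abs_less_iff)

theorem lemma29:
  fixes \<gamma> :: "nat \<Rightarrow> real" and f :: "real \<Rightarrow> complex"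
  assumes pos: "\<And>n. \<gamma> n > 0"
    and C1: "filterlim \<gamma> at_top sequentially"
    and C2: "(\<lambda>n. \<gamma> (Suc n) - \<gamma> n) \<longlonglongrightarrow> 0"
    and C3: "\<exists>n0 m0. \<forall>n\<ge>n0. \<forall>m\<ge>m0. \<gamma> (n + m) > \<gamma> n"
    and C4: "\<not> summable (\<lambda>j. 1 / \<gamma> j)"
    and C5: "\<exists>\<kappa>>1. summable (\<lambda>j. \<gamma> j powr (- \<kappa>))"
    and C6: "summable (\<lambda>n. \<bar>\<gamma> (Suc n) - \<gamma> n\<bar> / (\<gamma> n)\<^sup>2)"
    and C7: "summable (\<lambda>n. \<bar>(\<gamma> (Suc (Suc n)) - \<gamma> (Suc n)) - (\<gamma> (Suc n) - \<gamma> n)\<bar> / \<gamma> n)"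
    and f: "f \<in> classL \<gamma>"
  shows "\<exists>L::real. \<forall>a b.
           uniform_limit {a..b} (\<lambda>n t. beta \<gamma> n f t) (\<lambda>t. L) sequentially \<and>
           uniform_limit {a..b} (\<lambda>n t. nu \<gamma> n f t) (\<lambda>t. L / 2) sequentially"
proof -
  have sm: "smooth_RC f" using f by (simp add: classL_def)
  have uc: "\<And>a b. uniformly_convergent_on {a..b} (\<lambda>n t. beta \<gamma> n f t)"
    using f by (simp add: classL_def)
  define L where "L = lim (\<lambda>n. beta \<gamma> n f 0)"
  have limL: "lim (\<lambda>n. beta \<gamma> n f x) = L" for x
  proof (cases x "0::real" rule: linorder_cases)
    case less
    then show ?thesis unfolding L_def using beta_const[where \<gamma>=\<gamma>, OF pos C1 C4 sm uc less] by simp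
  next
    case equal
    then show ?thesis unfolding L_def by simp
  next
    case greater
    then show ?thesis unfolding L_def using beta_const[where \<gamma>=\<gamma>, OF pos C1 C4 sm uc greater] by simp
  qed
  have tL: "(\<lambda>n. beta \<gamma> n f x) \<longlonglongrightarrow> L" for x
    using beta_conv[where \<gamma>=\<gamma>, OF uc, of x] limL[of x] by simp
  have wpos: "\<And>n. 1 / \<gamma> n > 0" using pos by simp
  define W where "W = (\<lambda>N. \<Sum>n\<le>N. 1 / \<gamma> n)"
  have Wpos: "W N > 0" for N unfolding W_def using wpos by (intro sum_pos) auto
  have Winf: "filterlim W at_top sequentially"
    unfolding W_def by (rule partial_sums_at_top[OF wpos C4])
  obtain N1 where N1: "\<And>n. n \<ge> N1 \<Longrightarrow> 1 \<le> \<gamma> n"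
    using C1 unfolding filterlim_at_top eventually_sequentially by blast
  show ?thesis
  proof (intro exI[of _ L] allI conjI)
    fix a b :: real
    obtain l where l: "uniform_limit {a..b} (\<lambda>n t. beta \<gamma> n f t) l sequentially"
      using uc[of a b] unfolding uniformly_convergent_on_def by blast
    have lL: "\<And>x. x \<in> {a..b} \<Longrightarrow> l x = L"
      using LIMSEQ_unique[OF tendsto_uniform_limitI[OF l] tL] by blast
    show ul: "uniform_limit {a..b} (\<lambda>n t. beta \<gamma> n f t) (\<lambda>t. L) sequentially"
    proof (rule uniform_limitI)
      fix e :: real assume "e > 0"
      from uniform_limitD[OF l this]
      show "\<forall>\<^sub>F n in sequentially. \<forall>x\<in>{a..b}. dist (beta \<gamma> n f x) L < e"
        by (rule eventually_mono) (use lL in auto)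
    qed
    have cu: "uniform_limit {a..b} (\<lambda>N x. (\<Sum>n\<le>N. 1 / \<gamma> n * beta \<gamma> n f x) / (\<Sum>n\<le>N. 1 / \<gamma> n)) (\<lambda>x. L) sequentially"
    proof (rule cesaro_unif[OF wpos C4 ul])
      show "\<exists>B. \<forall>t\<in>{a..b}. \<bar>beta \<gamma> n f t\<bar> \<le> B" for n
        by (rule cont_bounded[OF beta_cont[OF sm]])
    qed auto
    obtain N0 M where NM: "\<And>n x. n \<ge> N0 \<Longrightarrow> x \<in> {a..b} \<Longrightarrow> beta \<gamma> n f x \<le> M"
      using beta_bound[where \<gamma>=\<gamma>, OF pos sm uc[of a b]] by blast
    have cK0: "continuous_on {a..b} (\<lambda>x. (cmod (Kop \<gamma> 0 f x))\<^sup>2)"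
      by (intro continuous_intros Kop_cont[OF sm])
    obtain B0 where B0: "\<And>x. x \<in> {a..b} \<Longrightarrow> \<bar>(cmod (Kop \<gamma> 0 f x))\<^sup>2\<bar> \<le> B0"
      using cont_bounded[OF cK0] by blast
    show "uniform_limit {a..b} (\<lambda>n t. nu \<gamma> n f t) (\<lambda>t. L / 2) sequentially"
    proof (rule uniform_limitI)
      fix e :: real assume e: "e > 0"
      have ev1: "\<forall>\<^sub>F N in sequentially. \<forall>x\<in>{a..b}.
          dist ((\<Sum>n\<le>N. 1 / \<gamma> n * beta \<gamma> n f x) / (\<Sum>n\<le>N. 1 / \<gamma> n)) L < e"
        using uniform_limitD[OF cu e] by simp
      have ev2: "\<forall>\<^sub>F N in sequentially. (\<bar>M\<bar> + \<bar>B0\<bar>) / e + 1 \<le> W N"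
        using Winf unfolding filterlim_at_top by blast
      have ev3: "\<forall>\<^sub>F N in sequentially. N \<ge> max N0 N1" by (rule eventually_ge_at_top)
      from ev1 ev2 ev3
      show "\<forall>\<^sub>F N in sequentially. \<forall>x\<in>{a..b}. dist (nu \<gamma> N f x) (L / 2) < e"
      proof eventually_elim
        case (elim N)
        show ?case
        proof
          fix x assume x: "x \<in> {a..b}"
          define Cv where "Cv = (\<Sum>n\<le>N. 1 / \<gamma> n * beta \<gamma> n f x) / W N"
          define T where "T = Tsum \<gamma> N f x"
          define K1 where "K1 = (cmod (Kop \<gamma> (Suc N) f x))\<^sup>2"
          define K0 where "K0 = (cmod (Kop \<gamma> 0 f x))\<^sup>2"
          have CvL: "\<bar>Cv - L\<bar> < e" using elim(1) x unfolding Cv_def W_def by (simp add: dist_real_def)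
          have "(\<Sum>n\<le>N. 1 / \<gamma> n * beta \<gamma> n f x) = (\<Sum>n\<le>N. beta \<gamma> n f x / \<gamma> n)" by simp
          also have "\<dots> = 2 * T + K1 - K0" unfolding beta_sum[where \<gamma>=\<gamma>, OF pos] T_def K1_def K0_def ..
          finally have hC: "Cv * W N = 2 * T + K1 - K0" unfolding Cv_def using Wpos[of N] by simp
          have nuT: "nu \<gamma> N f x = T / W N" unfolding nu_def T_def Tsum_def W_def ..
          have K1b: "K1 \<le> M" unfolding K1_def
            using Ksq_le_beta[where \<gamma>=\<gamma>, OF pos N1[of N], of f x] NM[of N x] elim(3) x by auto
          have K0b: "K0 \<le> \<bar>B0\<bar>" unfolding K0_def using B0[OF x] by simp
          have Kpos: "K1 \<ge> 0" "K0 \<ge> 0" unfolding K1_def K0_def by simp_all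
          have "(\<bar>M\<bar> + \<bar>B0\<bar>) / e < W N" using elim(2) by linarith
          then have "\<bar>M\<bar> + \<bar>B0\<bar> < W N * e" using e by (simp add: pos_divide_less_eq)
          moreover have "\<bar>K1 - K0\<bar> \<le> \<bar>M\<bar> + \<bar>B0\<bar>" using K1b K0b Kpos by linarith
          ultimately have "\<bar>K1 - K0\<bar> < e * W N" by (simp add: mult.commute)
          then have KW: "\<bar>(K1 - K0) / W N\<bar> < e"
            using Wpos[of N] by (simp add: abs_divide pos_divide_less_eq)
          have "T / W N - L / 2 = (Cv - L) / 2 - ((K1 - K0) / W N) / 2"
          proof -
            have "T = (Cv * W N - K1 + K0) / 2" using hC by simp
            then show ?thesis using Wpos[of N] by (simp add: field_simps)
          qed
          then have "\<bar>T / W N - L / 2\<bar> < e" by (rule aux_half[OF _ CvL KW])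
          then show "dist (nu \<gamma> N f x) (L / 2) < e" unfolding nuT dist_real_def .
        qed
      qed
    qed
  qed
qed

end
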